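(* $\mathcal{B}$ and $\mathcal{B}_{\mathcal{U}}$ are weak quadratic algebras, and $\widehat{\mu}$ is a $q$-measure on the weak quadratic algebra $\mathcal{B}$ that extends $\mu$ (i.e. $\mathcal{C}\subseteq\mathcal{B}$ and $\widehat{\mu}=\mu$ on $\mathcal{C}$).
   Context: For $n\ge1$, $\Omega_n$ is the set of strings $\alpha_0\alpha_1\cdots\alpha_n$ with $\alpha_k\in\{0,1\}$, $\alpha_0=0$. For $\omega=\alpha_0\cdots\alpha_n$, $\omega'=\alpha'_0\cdots\alpha'_n\in\Omega_n$ let $D^n(\omega,\omega')=2^{-n}\prod_{k=1}^n i^{|\alpha_k-\alpha_{k-1}|}\prod_{k=1}^n i^{-|\alpha'_k-\alpha'_{k-1}|}\,\delta_{\alpha_n\alpha'_n}$ ($i=\sqrt{-1}$) and for $A\subseteq\Omega_n$, $\mu_n(A)=\sum_{\omega,\omega'\in A}D^n(\omega,\omega')$. $\Omega$ is the set of infinite sequences $\alpha_0\alpha_1\cdots$ with $\alpha_k\in\{0,1\}$, $\alpha_0=0$. A cylinder set is a set $\{\alpha_0\alpha_1\cdots\in\Omega:\alpha_0\cdots\alpha_n\in E\}$ with $E\subseteq\Omega_n$; $\mathcal{C}$ is the collection of cylinder sets and $\mu$ of such a set is $\mu_n(E)$ (well defined). For $A\subseteq\Omega$ and $n\ge0$, $A^{(n)}=\{\omega\in\Omega:\text{some }\omega'\in A\text{ has the same first }n+1\text{ entries as }\omega\}$. $A$ is beneficial if $\lim_n\mu(A^{(n)})$ exists and is finite, and then $\widehat{\mu}(A)=\lim_n\mu(A^{(n)})$;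 $\mathcal{B}$ is the collection of beneficial sets. $A$ is an upper set if $A=\bigcup_n\big(\Omega\setminus(\Omega\setminus A)^{(n)}\big)$; $\mathcal{U}$ is the collection of upper sets and $\mathcal{B}_{\mathcal{U}}=\{A\in\mathcal{U}:\lim_n\mu(\Omega\setminus(\Omega\setminus A)^{(n)})\text{ exists}\}$. Sets $A,B\subseteq\Omega$ are strongly disjoint if $A^{(n)}\cap B^{(n)}=\emptyset$ for some $n$. A collection $Q\subseteq 2^\Omega$ is a weak quadratic algebra if $\emptyset,\Omega\in Q$ and whenever $A,B,C\in Q$ are (pairwise) strongly disjoint with $A\cup B,A\cup C,B\cup C\in Q$, then $A\cup B\cup C\in Q$. A $q$-measure on a weak quadratic algebra $Q$ is a map $\nu:Q\to[0,\infty)$ such that for such $A,B,C$: $\nu(A\cup B\cup C)=\nu(A\cup B)+\nu(A\cup C)+\nu(B\cup C)-\nu(A)-\nu(B)-\nu(C)$. *)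

theory Defs
  imports Complex_Main
begin

text \<open>Bits are encoded as booleans: False = 0, True = 1.
  Infinite sequences are functions nat \<Rightarrow> bool; finite strings
  alpha_0 ... alpha_n are lists of length n+1.\<close>

type_synonym path = "nat \<Rightarrow> bool"

definition Omega :: "path set" where
  "Omega = {w. w 0 = False}"

definition Omega_n :: "nat \<Rightarrow> bool list set" where
  "Omega_n n = {xs. length xs = Suc n \<and> xs ! 0 = False}"

text \<open>i^{|alpha_k - alpha_{k-1}|}: equals i if the bits differ, 1 otherwise.\<close>
definition D :: "nat \<Rightarrow> bool list \<Rightarrow> bool list \<Rightarrow> complex" where
  "D n xs ys =
     (1 / 2 ^ n) *
     (\<Prod>k\<in>{1..n}. \<i> ^ (if xs ! k = xs ! (k - 1) then 0 else 1)) *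
     (\<Prod>k\<in>{1..n}. (inverse \<i>) ^ (if ys ! k = ys ! (k - 1) then 0 else 1)) *
     (if xs ! n = ys ! n then 1 else 0)"

definition mu_n :: "nat \<Rightarrow> bool list set \<Rightarrow> complex" where
  "mu_n n A = (\<Sum>x\<in>A. \<Sum>y\<in>A. D n x y)"

definition prefix :: "nat \<Rightarrow> path \<Rightarrow> bool list" where
  "prefix n w = map w [0..<Suc n]"

definition cyl :: "nat \<Rightarrow> bool list set \<Rightarrow> path set" where
  "cyl n E = {w \<in> Omega. prefix n w \<in> E}"

definition Cyl :: "path set set" where
  "Cyl = {cyl n E | n E. 1 \<le> n \<and> E \<subseteq> Omega_n n}"

text \<open>mu on cylinder sets: the value mu_n(E) for a representation A = cyl n E
  (well defined, as stated in the paper).\<close>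
definition mu :: "path set \<Rightarrow> complex" where
  "mu A = (SOME c. \<exists>n E. 1 \<le> n \<and> E \<subseteq> Omega_n n \<and> A = cyl n E \<and> c = mu_n n E)"

definition up :: "nat \<Rightarrow> path set \<Rightarrow> path set" where
  "up n A = {w \<in> Omega. \<exists>w'\<in>A. \<forall>k\<le>n. w k = w' k}"

definition beneficial :: "path set \<Rightarrow> bool" where
  "beneficial A \<longleftrightarrow> A \<subseteq> Omega \<and> convergent (\<lambda>n. mu (up n A))"

definition Ben :: "path set set" where
  "Ben = {A. beneficial A}"

definition muhat :: "path set \<Rightarrow> complex" where
  "muhat A = lim (\<lambda>n. mu (up n A))"

definition upper_set :: "path set \<Rightarrow> bool" where
  "upper_set A \<longleftrightarrow> A \<subseteq> Omega \<and> A = (\<Union>n. Omega - up n (Omega - A))"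

definition Ben_U :: "path set set" where
  "Ben_U = {A. upper_set A \<and> convergent (\<lambda>n. mu (Omega - up n (Omega - A)))}"

definition strongly_disjoint :: "path set \<Rightarrow> path set \<Rightarrow> bool" where
  "strongly_disjoint A B \<longleftrightarrow> (\<exists>n. up n A \<inter> up n B = {})"

definition admissible_triple :: "path set set \<Rightarrow> path set \<Rightarrow> path set \<Rightarrow> path set \<Rightarrow> bool" where
  "admissible_triple Q A B C \<longleftrightarrow>
     A \<in> Q \<and> B \<in> Q \<and> C \<in> Q \<and>
     strongly_disjoint A B \<and> strongly_disjoint A C \<and> strongly_disjoint B C \<and>
     A \<union> B \<in> Q \<and> A \<union> C \<in> Q \<and> B \<union> C \<in> Q"

definition weak_quadratic_algebra :: "path set set \<Rightarrow> bool" where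
  "weak_quadratic_algebra Q \<longleftrightarrow>
     {} \<in> Q \<and> Omega \<in> Q \<and>
     (\<forall>A B C. admissible_triple Q A B C \<longrightarrow> A \<union> B \<union> C \<in> Q)"

text \<open>q-measure: values in [0,oo) (as complex numbers: real and nonnegative)
  satisfying the grade-2 additivity condition.\<close>
definition q_measure :: "path set set \<Rightarrow> (path set \<Rightarrow> complex) \<Rightarrow> bool" where
  "q_measure Q \<nu> \<longleftrightarrow>
     (\<forall>A\<in>Q. Im (\<nu> A) = 0 \<and> 0 \<le> Re (\<nu> A)) \<and>
     (\<forall>A B C. admissible_triple Q A B C \<longrightarrow>
        \<nu> (A \<union> B \<union> C) = \<nu> (A \<union> B) + \<nu> (A \<union> C) + \<nu> (B \<union> C) - \<nu> A - \<nu> B - \<nu> C)"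

end

theory Submission
  imports Defs
begin


definition ext :: "bool list \<Rightarrow> path" where
  "ext xs = (\<lambda>k. if k < length xs then xs ! k else False)"

lemma finite_Omega_n: "finite (Omega_n n)"
proof -
  have "Omega_n n \<subseteq> {xs. set xs \<subseteq> UNIV \<and> length xs = Suc n}" by (auto simp: Omega_n_def)
  moreover have "finite {xs::bool list. set xs \<subseteq> UNIV \<and> length xs = Suc n}"
    by (rule finite_lists_length_eq) simp
  ultimately show ?thesis using finite_subset by blast
qed

lemma prefix_eq_iff: "prefix n w = prefix n w' \<longleftrightarrow> (\<forall>k\<le>n. w k = w' k)"
  unfolding prefix_def by (auto simp: map_eq_conv less_Suc_eq_le)

lemma prefix_Omega_n: "w \<in> Omega \<Longrightarrow> prefix n w \<in> Omega_n n"
  by (simp add: prefix_def Omega_n_def Omega_def nth_map_upt del: upt_Suc)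

lemma ext_Omega: "xs \<in> Omega_n m \<Longrightarrow> ext xs \<in> Omega"
  by (simp add: ext_def Omega_n_def Omega_def)

lemma prefix_ext: "xs \<in> Omega_n m \<Longrightarrow> n \<le> m \<Longrightarrow> prefix n (ext xs) = take (Suc n) xs"
  by (auto simp: prefix_def ext_def Omega_n_def intro!: nth_equalityI simp del: upt_Suc)

lemma prefix_ext_same: "xs \<in> Omega_n m \<Longrightarrow> prefix m (ext xs) = xs"
  using prefix_ext[of xs m m] by (simp add: Omega_n_def)

lemma cyl_determ:
  assumes "cyl n E = cyl m F" "E \<subseteq> Omega_n n" "F \<subseteq> Omega_n m" "n \<le> m"
  shows "F = {xs \<in> Omega_n m. take (Suc n) xs \<in> E}"
proof (intro set_eqI iffI)
  fix xs assume xs: "xs \<in> F"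
  hence o: "xs \<in> Omega_n m" using assms by auto
  have "ext xs \<in> cyl m F" using xs o by (simp add: cyl_def ext_Omega prefix_ext_same)
  hence "ext xs \<in> cyl n E" using assms by simp
  thus "xs \<in> {xs \<in> Omega_n m. take (Suc n) xs \<in> E}" using o assms(4) by (simp add: cyl_def prefix_ext)
next
  fix xs assume "xs \<in> {xs \<in> Omega_n m. take (Suc n) xs \<in> E}"
  hence o: "xs \<in> Omega_n m" and t: "take (Suc n) xs \<in> E" by auto
  have "ext xs \<in> cyl n E" using o t assms(4) by (simp add: cyl_def ext_Omega prefix_ext)
  hence "ext xs \<in> cyl m F" using assms by simp
  thus "xs \<in> F" using o by (simp add: cyl_def prefix_ext_same)
qed

lemma cyl_disj:
  assumes "cyl m X \<inter> cyl m Y = {}" "X \<subseteq> Omega_n m" "Y \<subseteq> Omega_n m"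
  shows "X \<inter> Y = {}"
proof (rule ccontr)
  assume "X \<inter> Y \<noteq> {}"
  then obtain xs where "xs \<in> X" "xs \<in> Y" by auto
  moreover have "xs \<in> Omega_n m" using assms \<open>xs \<in> X\<close> by auto
  ultimately have "ext xs \<in> cyl m X \<inter> cyl m Y" by (auto simp: cyl_def ext_Omega prefix_ext_same)
  thus False using assms by auto
qed

lemma cyl_Un: "cyl n (E \<union> F) = cyl n E \<union> cyl n F" by (auto simp: cyl_def)

definition P :: "nat \<Rightarrow> path set \<Rightarrow> bool list set" where
  "P n A = prefix n ` (A \<inter> Omega)"

lemma P_sub: "P n A \<subseteq> Omega_n n" by (auto simp: P_def prefix_Omega_n)

lemma up_cyl: "up n A = cyl n (P n A)"
  by (auto simp: up_def cyl_def P_def prefix_eq_iff Omega_def)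

lemma up_Un: "up n (A \<union> B) = up n A \<union> up n B" by (auto simp: up_def)

lemma up_anti: "n \<le> m \<Longrightarrow> up m A \<subseteq> up n A" by (auto simp: up_def)

lemma up_mono: "A \<subseteq> B \<Longrightarrow> up n A \<subseteq> up n B" by (auto simp: up_def)

lemma sub_up: "A \<subseteq> Omega \<Longrightarrow> A \<subseteq> up n A" by (auto simp: up_def)

lemma up_Omega: "up n Omega = Omega" by (auto simp: up_def)
lemma up_empty: "up n {} = {}" by (auto simp: up_def)

lemma compl_up_cyl: "Omega - up n X = cyl n (Omega_n n - P n X)"
  by (auto simp: up_cyl cyl_def prefix_Omega_n)

lemma up_cyl_same: assumes "n \<le> m" shows "up m (cyl n E) = cyl n E"
proof -
  have "prefix n x = prefix n w'" if "\<forall>k\<le>m. x k = w' k" for x w'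
    using that \<open>n \<le> m\<close> by (auto simp: prefix_eq_iff)
  thus ?thesis by (auto simp: up_def cyl_def) metis
qed



definition cP :: "bool list \<Rightarrow> nat \<Rightarrow> complex" where
  "cP x m = (\<Prod>k\<in>{1..m}. \<i> ^ (if x ! k = x ! (k - 1) then 0 else 1))"
definition cQ :: "bool list \<Rightarrow> nat \<Rightarrow> complex" where
  "cQ x m = (\<Prod>k\<in>{1..m}. (inverse \<i>) ^ (if x ! k = x ! (k - 1) then 0 else 1))"

lemma D_eq: "D m x y = 1/2^m * cP x m * cQ y m * (if x ! m = y ! m then 1 else 0)"
  by (simp add: D_def cP_def cQ_def)

lemma cP_app: assumes "length x = Suc m"
  shows "cP (x @ [a]) (Suc m) = cP x m * \<i> ^ (if a = x ! m then 0 else 1)"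
proof -
  have "cP (x @ [a]) (Suc m) = cP (x @ [a]) m * \<i> ^ (if a = x ! m then 0 else 1)"
    unfolding cP_def using assms by (simp add: prod.cl_ivl_Suc nth_append)
  moreover have "cP (x @ [a]) m = cP x m"
    unfolding cP_def using assms by (intro prod.cong) (auto simp: nth_append)
  ultimately show ?thesis by simp
qed

lemma cQ_app: assumes "length x = Suc m"
  shows "cQ (x @ [a]) (Suc m) = cQ x m * (inverse \<i>) ^ (if a = x ! m then 0 else 1)"
proof -
  have "cQ (x @ [a]) (Suc m) = cQ (x @ [a]) m * (inverse \<i>) ^ (if a = x ! m then 0 else 1)"
    unfolding cQ_def using assms by (simp add: prod.cl_ivl_Suc nth_append)
  moreover have "cQ (x @ [a]) m = cQ x m"
    unfolding cQ_def using assms by (intro prod.cong) (auto simp: nth_append)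
  ultimately show ?thesis by simp
qed

lemma hs: "(\<Sum>a\<in>UNIV. \<Sum>b\<in>UNIV. \<i> ^ (if a = (p::bool) then 0 else 1) * (inverse \<i>) ^ (if b = (q::bool) then 0 else 1) * (if a = b then 1 else 0 :: complex)) = (if p = q then 2 else 0)"
  unfolding UNIV_bool by (cases p; cases q) simp_all

lemma D_sum_ext:
  assumes "length x = Suc m" "length y = Suc m"
  shows "(\<Sum>a\<in>UNIV. \<Sum>b\<in>UNIV. D (Suc m) (x @ [a]) (y @ [b])) = D m x y"
proof -
  let ?K = "1/2^(Suc m) * cP x m * cQ y m"
  have "D (Suc m) (x @ [a]) (y @ [b]) = ?K * (\<i> ^ (if a = x ! m then 0 else 1)
     * (inverse \<i>) ^ (if b = y ! m then 0 else 1) * (if a = b then 1 else 0))" for a b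
    using assms by (simp add: D_eq cP_app cQ_app nth_append mult_ac)
  hence "(\<Sum>a\<in>UNIV. \<Sum>b\<in>UNIV. D (Suc m) (x @ [a]) (y @ [b])) =
     ?K * (\<Sum>a\<in>UNIV. \<Sum>b\<in>UNIV. \<i> ^ (if a = x ! m then 0 else 1)
     * (inverse \<i>) ^ (if b = y ! m then 0 else 1) * (if a = b then 1 else 0))"
    by (simp add: sum_distrib_left)
  also have "\<dots> = ?K * (if x ! m = y ! m then 2 else 0)" by (simp only: hs)
  also have "\<dots> = D m x y" by (simp add: D_eq)
  finally show ?thesis .
qed

lemma sum_pair: "(\<Sum>p\<in>A\<times>B. f p) = (\<Sum>x\<in>A. \<Sum>y\<in>B. f (x,y))"
  by (simp add: sum.cartesian_product)

lemma step_mu: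
  assumes G: "G \<subseteq> Omega_n m"
  shows "mu_n (Suc m) {ys \<in> Omega_n (Suc m). butlast ys \<in> G} = mu_n m G"
proof -
  let ?f = "\<lambda>(x::bool list, a::bool). x @ [a]"
  have S: "{ys \<in> Omega_n (Suc m). butlast ys \<in> G} = ?f ` (G \<times> UNIV)"
  proof (intro set_eqI iffI)
    fix ys assume "ys \<in> {ys \<in> Omega_n (Suc m). butlast ys \<in> G}"
    hence "ys \<noteq> []" "butlast ys \<in> G" by (auto simp: Omega_n_def)
    hence "ys = ?f (butlast ys, last ys)" "(butlast ys, last ys) \<in> G \<times> UNIV" by auto
    thus "ys \<in> ?f ` (G \<times> UNIV)" by blast
  next
    fix ys assume "ys \<in> ?f ` (G \<times> UNIV)"
    then obtain x a where "x \<in> G" "ys = x @ [a]" by auto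
    thus "ys \<in> {ys \<in> Omega_n (Suc m). butlast ys \<in> G}" using G
      by (auto simp: Omega_n_def nth_append)
  qed
  have inj: "inj_on ?f (G \<times> UNIV)" by (auto simp: inj_on_def)
  have fin: "finite G" using G finite_Omega_n finite_subset by blast
  have "mu_n (Suc m) {ys \<in> Omega_n (Suc m). butlast ys \<in> G}
      = (\<Sum>p\<in>G \<times> UNIV. \<Sum>q\<in>G \<times> UNIV. D (Suc m) (?f p) (?f q))"
    unfolding mu_n_def S by (simp add: sum.reindex[OF inj])
  also have "\<dots> = (\<Sum>x\<in>G. \<Sum>a\<in>UNIV. \<Sum>y\<in>G. \<Sum>b\<in>UNIV. D (Suc m) (x @ [a]) (y @ [b]))"
    by (simp only: sum_pair prod.case)
  also have "\<dots> = (\<Sum>x\<in>G. \<Sum>y\<in>G. \<Sum>a\<in>UNIV. \<Sum>b\<in>UNIV. D (Suc m) (x @ [a]) (y @ [b]))"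
    by (intro sum.cong refl sum.swap)
  also have "\<dots> = (\<Sum>x\<in>G. \<Sum>y\<in>G. D m x y)"
    using G by (intro sum.cong refl D_sum_ext) (auto simp: Omega_n_def)
  finally show ?thesis by (simp add: mu_n_def)
qed

lemma ext_mu:
  assumes "E \<subseteq> Omega_n n" "n \<le> m"
  shows "mu_n m {xs \<in> Omega_n m. take (Suc n) xs \<in> E} = mu_n n E"
  using assms(2)
proof (induction m rule: dec_induct)
  case base
  have "{xs \<in> Omega_n n. take (Suc n) xs \<in> E} = E" using assms(1) by (auto simp: Omega_n_def)
  thus ?case by simp
next
  case (step m)
  have "{xs \<in> Omega_n (Suc m). take (Suc n) xs \<in> E} =
        {ys \<in> Omega_n (Suc m). butlast ys \<in> {xs \<in> Omega_n m. take (Suc n) xs \<in> E}}"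
  proof (intro set_eqI)
    fix ys
    show "ys \<in> {xs \<in> Omega_n (Suc m). take (Suc n) xs \<in> E} \<longleftrightarrow>
        ys \<in> {ys \<in> Omega_n (Suc m). butlast ys \<in> {xs \<in> Omega_n m. take (Suc n) xs \<in> E}}"
    proof (cases "length ys = Suc (Suc m)")
      case False thus ?thesis by (simp add: Omega_n_def)
    next
      case True
      then obtain x a where ys: "ys = x @ [a]" by (cases ys rule: rev_exhaust) auto
      with True have lx: "length x = Suc m" by simp
      have t: "take (Suc n) ys = take (Suc n) x" using lx step(1) by (simp add: ys)
      have z: "ys ! 0 = x ! 0" using lx by (simp add: ys nth_append)
      show ?thesis using lx t z by (simp add: ys Omega_n_def)
    qed
  qed
  thus ?case using step step_mu[of "{xs \<in> Omega_n m. take (Suc n) xs \<in> E}" m] by auto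
qed

lemma mu_n_unique:
  assumes "cyl n E = cyl m F" "E \<subseteq> Omega_n n" "F \<subseteq> Omega_n m" "n \<le> m"
  shows "mu_n m F = mu_n n E"
  using cyl_determ[OF assms] ext_mu[OF assms(2,4)] by simp

lemma mu_cyl:
  assumes "1 \<le> n" "E \<subseteq> Omega_n n"
  shows "mu (cyl n E) = mu_n n E"
  unfolding mu_def
proof (rule some_equality)
  show "\<exists>n' E'. 1 \<le> n' \<and> E' \<subseteq> Omega_n n' \<and> cyl n E = cyl n' E' \<and> mu_n n E = mu_n n' E'"
    using assms by blast
next
  fix c assume "\<exists>n' E'. 1 \<le> n' \<and> E' \<subseteq> Omega_n n' \<and> cyl n E = cyl n' E' \<and> c = mu_n n' E'"
  then obtain n' E' where h: "E' \<subseteq> Omega_n n'" "cyl n E = cyl n' E'" "c = mu_n n' E'" by blast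
  show "c = mu_n n E"
  proof (cases "n \<le> n'")
    case True thus ?thesis using mu_n_unique[OF h(2) assms(2) h(1)] h by simp
  next
    case False thus ?thesis using mu_n_unique[OF h(2)[symmetric] h(1) assms(2)] h by simp
  qed
qed



lemma cQ_cnj: "cQ y n = cnj (cP y n)"
  unfolding cQ_def cP_def by (simp add: inverse_eq_divide)

lemma sq_sum:
  fixes f :: "bool list \<Rightarrow> complex" and g :: "bool list \<Rightarrow> bool"
  assumes "finite E"
  shows "(\<Sum>x\<in>E. \<Sum>y\<in>E. f x * cnj (f y) * (if g x = g y then 1 else 0)) =
    (\<Sum>x\<in>E. if g x then f x else 0) * cnj (\<Sum>x\<in>E. if g x then f x else 0) +
    (\<Sum>x\<in>E. if g x then 0 else f x) * cnj (\<Sum>x\<in>E. if g x then 0 else f x)"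
  unfolding cnj_sum sum_product sum.distrib[symmetric]
  by (intro sum.cong refl) auto

lemma mu_n_nonneg: "Im (mu_n n E) = 0 \<and> 0 \<le> Re (mu_n n E)"
proof (cases "finite E")
  case False thus ?thesis by (simp add: mu_n_def)
next
  case True
  let ?s1 = "(\<Sum>x\<in>E. if x ! n then cP x n else 0)"
  let ?s0 = "(\<Sum>x\<in>E. if x ! n then 0 else cP x n)"
  have "mu_n n E = (\<Sum>x\<in>E. \<Sum>y\<in>E. 1/2^n * (cP x n * cnj (cP y n) * (if x ! n = y ! n then 1 else 0)))"
    unfolding mu_n_def D_eq cQ_cnj by (intro sum.cong refl) simp
  also have "\<dots> = 1/2^n * (?s1 * cnj ?s1 + ?s0 * cnj ?s0)"
    unfolding sum_distrib_left[symmetric] sq_sum[OF True] ..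
  also have "\<dots> = of_real (1/2^n * ((norm ?s1)^2 + (norm ?s0)^2))"
    unfolding complex_norm_square[symmetric] by simp
  finally show ?thesis by simp
qed

definition SS :: "nat \<Rightarrow> bool list set \<Rightarrow> bool list set \<Rightarrow> complex" where
  "SS n X Y = (\<Sum>x\<in>X. \<Sum>y\<in>Y. D n x y)"

lemma SS_Un1: "finite X \<Longrightarrow> finite Y \<Longrightarrow> X \<inter> Y = {} \<Longrightarrow> SS n (X \<union> Y) Z = SS n X Z + SS n Y Z"
  unfolding SS_def by (rule sum.union_disjoint)

lemma SS_Un2: "finite X \<Longrightarrow> finite Y \<Longrightarrow> X \<inter> Y = {} \<Longrightarrow> SS n Z (X \<union> Y) = SS n Z X + SS n Z Y"
  unfolding SS_def by (simp add: sum.union_disjoint sum.distrib)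

lemma mu_n_quad:
  assumes "X \<subseteq> Omega_n n" "Y \<subseteq> Omega_n n" "Z \<subseteq> Omega_n n"
    "X \<inter> Y = {}" "X \<inter> Z = {}" "Y \<inter> Z = {}"
  shows "mu_n n (X \<union> Y \<union> Z) = mu_n n (X \<union> Y) + mu_n n (X \<union> Z) + mu_n n (Y \<union> Z)
            - mu_n n X - mu_n n Y - mu_n n Z"
proof -
  have f: "finite X" "finite Y" "finite Z" using assms(1-3) finite_Omega_n finite_subset by blast+
  have fu: "finite (X \<union> Y)" using f by simp
  have d1: "(X \<union> Y) \<inter> Z = {}" using assms by auto
  have m: "mu_n n A = SS n A A" for A by (simp add: mu_n_def SS_def)
  have e3: "SS n (X \<union> Y \<union> Z) (X \<union> Y \<union> Z) =
     SS n X X + SS n X Y + SS n X Z + SS n Y X + SS n Y Y + SS n Y Z + SS n Z X + SS n Z Y + SS n Z Z"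
    using f fu d1 assms(4-6) by (simp only: SS_Un1 SS_Un2 add_ac)
  have eXY: "SS n (X \<union> Y) (X \<union> Y) = SS n X X + SS n X Y + SS n Y X + SS n Y Y"
    using f assms(4) by (simp only: SS_Un1 SS_Un2 add_ac)
  have eXZ: "SS n (X \<union> Z) (X \<union> Z) = SS n X X + SS n X Z + SS n Z X + SS n Z Z"
    using f assms(5) by (simp only: SS_Un1 SS_Un2 add_ac)
  have eYZ: "SS n (Y \<union> Z) (Y \<union> Z) = SS n Y Y + SS n Y Z + SS n Z Y + SS n Z Z"
    using f assms(6) by (simp only: SS_Un1 SS_Un2 add_ac)
  show ?thesis unfolding m e3 eXY eXZ eYZ by (simp add: algebra_simps)
qed



lemma mu_up: "1 \<le> n \<Longrightarrow> mu (up n A) = mu_n n (P n A)"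
  by (simp add: up_cyl mu_cyl P_sub)

lemma Omega_cyl: "Omega = cyl 1 (Omega_n 1)" by (auto simp: cyl_def prefix_Omega_n)
lemma empty_cyl: "{} = cyl 1 {}" by (auto simp: cyl_def)

lemma conv_combo:
  fixes fabc fab fac fbc fa fb fc :: "nat \<Rightarrow> complex"
  assumes ev: "\<forall>m\<ge>N. fabc m = fab m + fac m + fbc m - fa m - fb m - fc m"
    and c: "convergent fab" "convergent fac" "convergent fbc" "convergent fa" "convergent fb" "convergent fc"
  shows "convergent fabc \<and> lim fabc = lim fab + lim fac + lim fbc - lim fa - lim fb - lim fc"
proof -
  have t: "(\<lambda>m. fab m + fac m + fbc m - fa m - fb m - fc m) \<longlonglongrightarrow> lim fab + lim fac + lim fbc - lim fa - lim fb - lim fc"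
    using c unfolding convergent_LIMSEQ_iff by (intro tendsto_intros)
  have "eventually (\<lambda>m. fabc m = fab m + fac m + fbc m - fa m - fb m - fc m) sequentially"
    using ev eventually_sequentially by blast
  hence "fabc \<longlonglongrightarrow> lim fab + lim fac + lim fbc - lim fa - lim fb - lim fc"
    using t tendsto_cong[of fabc] by simp
  thus ?thesis by (auto simp: convergent_def limI)
qed

lemma sd_eventually:
  assumes "strongly_disjoint A B"
  obtains N where "\<forall>m\<ge>N. up m A \<inter> up m B = {}"
proof -
  obtain n where "up n A \<inter> up n B = {}" using assms by (auto simp: strongly_disjoint_def)
  hence "\<forall>m\<ge>n. up m A \<inter> up m B = {}"
  proof (intro allI impI)
    fix m assume "n \<le> m" "up n A \<inter> up n B = {}"
    thus "up m A \<inter> up m B = {}" using up_anti[of n m A] up_anti[of n m B] by blast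
  qed
  thus ?thesis using that by blast
qed

lemma P_disj: "up m A \<inter> up m B = {} \<Longrightarrow> P m A \<inter> P m B = {}"
  using cyl_disj[of m "P m A" "P m B"] by (simp add: up_cyl P_sub)

lemma ben_triple:
  assumes h: "beneficial A" "beneficial B" "beneficial C" "beneficial (A \<union> B)" "beneficial (A \<union> C)"
     "beneficial (B \<union> C)" "strongly_disjoint A B" "strongly_disjoint A C" "strongly_disjoint B C"
  shows "beneficial (A \<union> B \<union> C) \<and> muhat (A \<union> B \<union> C) =
     muhat (A \<union> B) + muhat (A \<union> C) + muhat (B \<union> C) - muhat A - muhat B - muhat C"
proof -
  obtain N1 where N1: "\<forall>m\<ge>N1. up m A \<inter> up m B = {}" using sd_eventually[OF h(7)] by blast
  obtain N2 where N2: "\<forall>m\<ge>N2. up m A \<inter> up m C = {}" using sd_eventually[OF h(8)] by blast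
  obtain N3 where N3: "\<forall>m\<ge>N3. up m B \<inter> up m C = {}" using sd_eventually[OF h(9)] by blast
  let ?N = "max (max N1 N2) (max N3 1)"
  have ev: "\<forall>m\<ge>?N. mu (up m (A \<union> B \<union> C)) = mu (up m (A \<union> B)) + mu (up m (A \<union> C)) + mu (up m (B \<union> C))
       - mu (up m A) - mu (up m B) - mu (up m C)"
  proof (intro allI impI)
    fix m assume m: "?N \<le> m"
    hence m1: "1 \<le> m" by simp
    have d: "P m A \<inter> P m B = {}" "P m A \<inter> P m C = {}" "P m B \<inter> P m C = {}"
      using N1 N2 N3 m P_disj by auto
    have e3: "up m (A \<union> B \<union> C) = cyl m (P m A \<union> P m B \<union> P m C)"
      by (unfold up_Un, unfold up_cyl cyl_Un, rule refl)
    have e2: "up m (A \<union> B) = cyl m (P m A \<union> P m B)" "up m (A \<union> C) = cyl m (P m A \<union> P m C)"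
      "up m (B \<union> C) = cyl m (P m B \<union> P m C)"
      by (simp_all only: up_Un) (simp_all only: up_cyl cyl_Un)
    show "mu (up m (A \<union> B \<union> C)) = mu (up m (A \<union> B)) + mu (up m (A \<union> C)) + mu (up m (B \<union> C))
       - mu (up m A) - mu (up m B) - mu (up m C)"
      unfolding e3 e2 using m1 d
      by (simp add: mu_cyl P_sub mu_up mu_n_quad)
  qed
  have c: "convergent (\<lambda>m. mu (up m (A \<union> B \<union> C)))" and
    l: "lim (\<lambda>m. mu (up m (A \<union> B \<union> C))) = muhat (A \<union> B) + muhat (A \<union> C) + muhat (B \<union> C) - muhat A - muhat B - muhat C"
    using conv_combo[OF ev] h(1-6) by (auto simp: beneficial_def muhat_def)
  have "A \<union> B \<union> C \<subseteq> Omega" using h by (auto simp: beneficial_def)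
  thus ?thesis using c l by (simp add: beneficial_def muhat_def)
qed

definition intr :: "nat \<Rightarrow> path set \<Rightarrow> path set" where
  "intr m A = Omega - up m (Omega - A)"

lemma intr_iff: "w \<in> intr m A \<longleftrightarrow> w \<in> Omega \<and> (\<forall>w'\<in>Omega. (\<forall>k\<le>m. w k = w' k) \<longrightarrow> w' \<in> A)"
  by (auto simp: intr_def up_def)

lemma intr_sub: "intr m A \<subseteq> A" by (auto simp: intr_iff)
lemma intr_mono: "A \<subseteq> B \<Longrightarrow> intr m A \<subseteq> intr m B" unfolding subset_iff intr_iff by blast

lemma intr_split:
  assumes "up m A \<inter> up m X = {}" "A \<subseteq> Omega" "w \<in> intr m (A \<union> X)" "w \<in> A"
  shows "w \<in> intr m A"
  unfolding intr_iff
proof (intro conjI ballI impI)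
  show "w \<in> Omega" using assms by auto
  fix w' assume w': "w' \<in> Omega" "\<forall>k\<le>m. w k = w' k"
  hence "w' \<in> A \<union> X" using assms(3) by (auto simp: intr_iff)
  moreover have "w' \<notin> X"
  proof
    assume "w' \<in> X"
    hence "w' \<in> up m X" using w' by (auto simp: up_def)
    moreover have "w' \<in> up m A" using w' assms(4) by (auto simp: up_def)
    ultimately show False using assms(1) by auto
  qed
  ultimately show "w' \<in> A" by auto
qed

lemma intr_Un2:
  assumes "up m A \<inter> up m B = {}" "A \<subseteq> Omega" "B \<subseteq> Omega"
  shows "intr m (A \<union> B) = intr m A \<union> intr m B"
proof
  show "intr m A \<union> intr m B \<subseteq> intr m (A \<union> B)" using intr_mono by blast
  show "intr m (A \<union> B) \<subseteq> intr m A \<union> intr m B"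
  proof
    fix w assume w: "w \<in> intr m (A \<union> B)"
    hence "w \<in> A \<or> w \<in> B" using intr_sub by blast
    thus "w \<in> intr m A \<union> intr m B"
    proof
      assume "w \<in> A" thus ?thesis using intr_split[OF assms(1,2) w] by blast
    next
      assume "w \<in> B" 
      moreover have "up m B \<inter> up m A = {}" using assms(1) by blast
      moreover have "w \<in> intr m (B \<union> A)" using w by (simp add: Un_commute)
      ultimately show ?thesis using intr_split[of m B A w] assms(3) by blast
    qed
  qed
qed

definition Q :: "nat \<Rightarrow> path set \<Rightarrow> bool list set" where
  "Q m A = Omega_n m - P m (Omega - A)"

lemma Q_sub: "Q m A \<subseteq> Omega_n m" by (auto simp: Q_def)
lemma intr_cyl: "intr m A = cyl m (Q m A)" by (simp add: intr_def Q_def compl_up_cyl)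

lemma upper_Omega: "upper_set A \<Longrightarrow> A \<subseteq> Omega" by (simp add: upper_set_def)

lemma intr_disj:
  assumes "up m A \<inter> up m B = {}" "A \<subseteq> Omega"
  shows "Q m A \<inter> Q m B = {}"
proof -
  have "A \<inter> B \<subseteq> up m A \<inter> up m B" using sub_up[OF assms(2)] by (auto simp: up_def)
  hence "intr m A \<inter> intr m B = {}" using intr_sub assms(1) by blast
  thus ?thesis using cyl_disj[of m "Q m A" "Q m B"] by (simp add: intr_cyl Q_sub)
qed

lemma benU_triple:
  assumes h: "A \<in> Ben_U" "B \<in> Ben_U" "C \<in> Ben_U" "A \<union> B \<in> Ben_U" "A \<union> C \<in> Ben_U"
     "B \<union> C \<in> Ben_U" "strongly_disjoint A B" "strongly_disjoint A C" "strongly_disjoint B C"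
  shows "A \<union> B \<union> C \<in> Ben_U"
proof -
  have O: "A \<subseteq> Omega" "B \<subseteq> Omega" "C \<subseteq> Omega" using h by (auto simp: Ben_U_def upper_set_def)
  obtain N1 where N1: "\<forall>m\<ge>N1. up m A \<inter> up m B = {}" using sd_eventually[OF h(7)] by blast
  obtain N2 where N2: "\<forall>m\<ge>N2. up m A \<inter> up m C = {}" using sd_eventually[OF h(8)] by blast
  obtain N3 where N3: "\<forall>m\<ge>N3. up m B \<inter> up m C = {}" using sd_eventually[OF h(9)] by blast
  let ?N = "max (max N1 N2) (max N3 1)"
  have ev: "\<forall>m\<ge>?N. mu (intr m (A \<union> B \<union> C)) = mu (intr m (A \<union> B)) + mu (intr m (A \<union> C)) + mu (intr m (B \<union> C))
       - mu (intr m A) - mu (intr m B) - mu (intr m C)"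
  proof (intro allI impI)
    fix m assume m: "?N \<le> m"
    hence m1: "1 \<le> m" by simp
    have u: "up m A \<inter> up m B = {}" "up m A \<inter> up m C = {}" "up m B \<inter> up m C = {}"
      using N1 N2 N3 m by auto
    have u2: "up m (A \<union> B) \<inter> up m C = {}" using u by (auto simp: up_Un)
    have d: "Q m A \<inter> Q m B = {}" "Q m A \<inter> Q m C = {}" "Q m B \<inter> Q m C = {}"
      using u O intr_disj by auto
    have e3: "intr m (A \<union> B \<union> C) = cyl m (Q m A \<union> Q m B \<union> Q m C)"
      using intr_Un2[OF u2] intr_Un2[OF u(1) O(1,2)] O
      by (simp add: intr_cyl cyl_Un)
    have e2: "intr m (A \<union> B) = cyl m (Q m A \<union> Q m B)" "intr m (A \<union> C) = cyl m (Q m A \<union> Q m C)"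
      "intr m (B \<union> C) = cyl m (Q m B \<union> Q m C)"
      using intr_Un2[OF u(1) O(1,2)] intr_Un2[OF u(2) O(1,3)] intr_Un2[OF u(3) O(2,3)]
      by (simp_all add: intr_cyl cyl_Un)
    show "mu (intr m (A \<union> B \<union> C)) = mu (intr m (A \<union> B)) + mu (intr m (A \<union> C)) + mu (intr m (B \<union> C))
       - mu (intr m A) - mu (intr m B) - mu (intr m C)"
      unfolding e3 e2 using m1 d
      by (simp add: mu_cyl Q_sub intr_cyl mu_n_quad)
  qed
  have c: "convergent (\<lambda>m. mu (intr m (A \<union> B \<union> C)))"
    using conv_combo[OF ev] h(1-6) by (auto simp: Ben_U_def intr_def)
  have "upper_set (A \<union> B \<union> C)"
    unfolding upper_set_def
  proof (intro conjI)
    show "A \<union> B \<union> C \<subseteq> Omega" using O by auto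
    have "A \<union> B \<union> C \<subseteq> (\<Union>n. intr n (A \<union> B \<union> C))"
    proof -
      have "X \<subseteq> (\<Union>n. intr n (A \<union> B \<union> C))" if "X \<in> Ben_U" "X \<subseteq> A \<union> B \<union> C" for X
      proof -
        have "X = (\<Union>n. intr n X)" using that by (simp add: Ben_U_def upper_set_def intr_def)
        also have "\<dots> \<subseteq> (\<Union>n. intr n (A \<union> B \<union> C))" using intr_mono[OF that(2)] by blast
        finally show ?thesis .
      qed
      thus ?thesis using h(1-3) by (meson Un_least sup_ge1 sup_ge2 subset_trans)
    qed
    moreover have "(\<Union>n. intr n (A \<union> B \<union> C)) \<subseteq> A \<union> B \<union> C" using intr_sub by blast
    ultimately show "A \<union> B \<union> C = (\<Union>n. Omega - up n (Omega - (A \<union> B \<union> C)))"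
      unfolding intr_def by blast
  qed
  thus ?thesis using c by (simp add: Ben_U_def intr_def)
qed

lemma muhat_nonneg:
  assumes "beneficial A"
  shows "Im (muhat A) = 0 \<and> 0 \<le> Re (muhat A)"
proof -
  have t: "(\<lambda>n. mu (up n A)) \<longlonglongrightarrow> muhat A"
    using assms by (simp add: beneficial_def muhat_def convergent_LIMSEQ_iff)
  have ev: "\<forall>n\<ge>1. Im (mu (up n A)) = 0 \<and> 0 \<le> Re (mu (up n A))"
    using mu_up mu_n_nonneg by simp
  have ti: "(\<lambda>n. Im (mu (up n A))) \<longlonglongrightarrow> Im (muhat A)" using tendsto_Im[OF t] .
  have tr: "(\<lambda>n. Re (mu (up n A))) \<longlonglongrightarrow> Re (muhat A)" using tendsto_Re[OF t] .
  have e1: "\<exists>N. \<forall>n\<ge>N. 0 \<le> Im (mu (up n A))" using ev by (auto intro!: exI[of _ 1])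
  have e2: "\<exists>N. \<forall>n\<ge>N. Im (mu (up n A)) \<le> 0" using ev by (auto intro!: exI[of _ 1])
  have e3: "\<exists>N. \<forall>n\<ge>N. 0 \<le> Re (mu (up n A))" using ev by (auto intro!: exI[of _ 1])
  have "0 \<le> Im (muhat A)" using LIMSEQ_le_const[OF ti e1] .
  moreover have "Im (muhat A) \<le> 0" using LIMSEQ_le_const2[OF ti e2] .
  moreover have "0 \<le> Re (muhat A)" using LIMSEQ_le_const[OF tr e3] .
  ultimately show ?thesis by auto
qed

lemma cyl_ben:
  assumes "1 \<le> n" "E \<subseteq> Omega_n n"
  shows "beneficial (cyl n E) \<and> muhat (cyl n E) = mu (cyl n E)"
proof -
  have "\<forall>m\<ge>n. mu (up m (cyl n E)) = mu (cyl n E)" using up_cyl_same by simp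
  hence "eventually (\<lambda>m. mu (up m (cyl n E)) = mu (cyl n E)) sequentially"
    using eventually_sequentially by blast
  hence t: "(\<lambda>m. mu (up m (cyl n E))) \<longlonglongrightarrow> mu (cyl n E)"
    using tendsto_cong[of "\<lambda>m. mu (up m (cyl n E))" "\<lambda>_. mu (cyl n E)"] by simp
  have "cyl n E \<subseteq> Omega" by (auto simp: cyl_def)
  thus ?thesis using t by (auto simp: beneficial_def muhat_def convergent_def limI)
qed

theorem theorem4p7:
  shows "weak_quadratic_algebra Ben \<and> weak_quadratic_algebra Ben_U \<and>
         q_measure Ben muhat \<and> Cyl \<subseteq> Ben \<and> (\<forall>A\<in>Cyl. muhat A = mu A)"
proof (intro conjI)
  have be: "beneficial {}" by (simp add: beneficial_def up_empty convergent_const)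
  have bo: "beneficial Omega" by (simp add: beneficial_def up_Omega convergent_const)
  have bt: "admissible_triple Ben A B C \<Longrightarrow> beneficial (A \<union> B \<union> C) \<and> muhat (A \<union> B \<union> C) =
     muhat (A \<union> B) + muhat (A \<union> C) + muhat (B \<union> C) - muhat A - muhat B - muhat C" for A B C
    unfolding admissible_triple_def Ben_def mem_Collect_eq by (intro ben_triple) simp_all
  show "weak_quadratic_algebra Ben"
    unfolding weak_quadratic_algebra_def
  proof (intro conjI allI impI)
    show "{} \<in> Ben" "Omega \<in> Ben" using be bo by (simp_all add: Ben_def)
    fix A B C assume "admissible_triple Ben A B C"
    thus "A \<union> B \<union> C \<in> Ben" using bt by (simp add: Ben_def)
  qed
  have ue: "{} \<in> Ben_U" by (simp add: Ben_U_def upper_set_def up_Omega convergent_const)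
  have uo: "Omega \<in> Ben_U" by (simp add: Ben_U_def upper_set_def up_empty convergent_const)
  show "weak_quadratic_algebra Ben_U"
    unfolding weak_quadratic_algebra_def
  proof (intro conjI allI impI)
    show "{} \<in> Ben_U" "Omega \<in> Ben_U" using ue uo by simp_all
    fix A B C assume "admissible_triple Ben_U A B C"
    thus "A \<union> B \<union> C \<in> Ben_U" unfolding admissible_triple_def by (intro benU_triple) simp_all
  qed
  show "q_measure Ben muhat"
    unfolding q_measure_def
  proof (intro conjI allI impI ballI)
    fix A assume "A \<in> Ben"
    thus "Im (muhat A) = 0" "0 \<le> Re (muhat A)" using muhat_nonneg by (simp_all add: Ben_def)
  next
    fix A B C assume "admissible_triple Ben A B C"
    thus "muhat (A \<union> B \<union> C) = muhat (A \<union> B) + muhat (A \<union> C) + muhat (B \<union> C) - muhat A - muhat B - muhat C"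
      using bt by blast
  qed
  show "Cyl \<subseteq> Ben"
  proof
    fix A assume "A \<in> Cyl"
    then obtain n E where "1 \<le> n" "E \<subseteq> Omega_n n" "A = cyl n E" by (auto simp: Cyl_def)
    thus "A \<in> Ben" using cyl_ben by (simp add: Ben_def)
  qed
  show "\<forall>A\<in>Cyl. muhat A = mu A"
  proof
    fix A assume "A \<in> Cyl"
    then obtain n E where "1 \<le> n" "E \<subseteq> Omega_n n" "A = cyl n E" by (auto simp: Cyl_def)
    thus "muhat A = mu A" using cyl_ben by simp
  qed
qed


end
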